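(* Assume the loss $\ell(\mathbf{y},\cdot)$ is $L$-Lipschitz for all $\mathbf{y}$ and takes values in $[0,B]$, and the $T$ source tasks are independently drawn from a task distribution $\mathcal{D}_{\text{task}}$. Let $\widehat{\mathrm{Alg}}$ be the empirical minimizer of the ICL-ERM objective over the source tasks and $\mathcal{T}\sim\mathcal{D}_{\text{task}}$. Then with probability at least $1-2\delta$, the expected excess transfer learning risk obeys \[ \mathbb{E}_{\mathcal{T}}[R_\mathcal{T}(\widehat{\mathrm{Alg}})]\leq\min_{\varepsilon\geq0}\left\{4L\varepsilon+B\sqrt{\frac{2\log(\mathcal{N}(\mathcal{A},\rho,\varepsilon)/\delta)}{T}}\right\}. \]
   Context: Algorithms $\mathrm{Alg}\in\mathcal{A}$ map a sequence $\mathcal{S}^{(i)}=(\mathbf{x}_j,\mathbf{y}_j)_{j=1}^{i}$ to predictors $f^{\mathrm{Alg}}_{\mathcal{S}^{(i)}}$. Source task $t$ has sequence $\mathcal{S}_t=(\mathbf{x}_{ti},\mathbf{y}_{ti})_{i=1}^n$ i.i.d. from $\mathcal{D}_t$; $\widehat{\mathcal{L}}_t(\mathrm{Alg})=\frac1n\sum_{i}\ell(\mathbf{y}_{ti},f^{\mathrm{Alg}}_{\mathcal{S}_t^{(i-1)}}(\mathbf{x}_{ti}))$ and ICL-ERM is $\widehat{\mathrm{Alg}}=\arg\min_{\mathrm{Alg}}\frac1T\sum_t\widehat{\mathcal{L}}_t(\mathrm{Alg})$. For a target task $\mathcal{T}$ with sequence $\mathcal{S}_\mathcal{T}=(\mathbf{x}_i,\mathbf{y}_i)_{i=1}^n\sim\mathcal{D}_\mathcal{T}$,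 $\widehat{\mathcal{L}}_\mathcal{T}(\mathrm{Alg})=\frac1n\sum_i\ell(\mathbf{y}_i,f^{\mathrm{Alg}}_{\mathcal{S}^{(i-1)}_\mathcal{T}}(\mathbf{x}_i))$, $\mathcal{L}_\mathcal{T}=\mathbb{E}_{\mathcal{S}_\mathcal{T}}[\widehat{\mathcal{L}}_\mathcal{T}]$, and $\mathbb{E}_{\mathcal{T}}[R_\mathcal{T}(\widehat{\mathrm{Alg}})]:=\mathbb{E}_{\mathcal{T}}[\mathcal{L}_\mathcal{T}(\widehat{\mathrm{Alg}})]-\min_{\mathrm{Alg}\in\mathcal{A}}\mathbb{E}_{\mathcal{T}}[\mathcal{L}_\mathcal{T}(\mathrm{Alg})]$. $\rho(\mathrm{Alg},\mathrm{Alg}')=\sup_{\mathcal{S}}\frac1n\sum_{i=1}^n\|f^{\mathrm{Alg}}_{\mathcal{S}^{(i-1)}}(\mathbf{x}_i)-f^{\mathrm{Alg}'}_{\mathcal{S}^{(i-1)}}(\mathbf{x}_i)\|_2$ over worst-case admissible sequences, and $\mathcal{N}(\mathcal{A},\rho,\varepsilon)$ is the $\varepsilon$-covering number. *)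

theory Defs
  imports "HOL-Probability.Probability"
begin

type_synonym ('x, 'y, 'p) icl_alg = "('x \<times> 'y) list \<Rightarrow> 'x \<Rightarrow> 'p"

text \<open>Sequences of length n are modelled as functions s :: nat => 'x * 'y (only
  indices i < n matter).  The prefix S^(i-1) of the paper (0-based index i here)
  is map s [0..<i].\<close>

definition emp_loss ::
  "('y \<Rightarrow> 'p \<Rightarrow> real) \<Rightarrow> nat \<Rightarrow> ('x, 'y, 'p) icl_alg \<Rightarrow> (nat \<Rightarrow> 'x \<times> 'y) \<Rightarrow> real" where
  "emp_loss l n alg s =
     (1 / real n) * (\<Sum>i<n. l (snd (s i)) (alg (map s [0..<i]) (fst (s i))))"

definition task_seq_dist :: "('task \<Rightarrow> ('x \<times> 'y) measure) \<Rightarrow> nat \<Rightarrow> 'task \<Rightarrow> (nat \<Rightarrow> 'x \<times> 'y) measure" where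
  "task_seq_dist D n \<tau> = PiM {..<n} (\<lambda>_. D \<tau>)"

definition source_seq_dist :: "'task measure \<Rightarrow> ('task \<Rightarrow> ('x \<times> 'y) measure) \<Rightarrow> nat \<Rightarrow> (nat \<Rightarrow> 'x \<times> 'y) measure" where
  "source_seq_dist DT D n = DT \<bind> task_seq_dist D n"

definition source_sample_dist :: "'task measure \<Rightarrow> ('task \<Rightarrow> ('x \<times> 'y) measure) \<Rightarrow> nat \<Rightarrow> nat \<Rightarrow> (nat \<Rightarrow> nat \<Rightarrow> 'x \<times> 'y) measure" where
  "source_sample_dist DT D n T = PiM {..<T} (\<lambda>_. source_seq_dist DT D n)"

definition icl_erm_obj ::
  "('y \<Rightarrow> 'p \<Rightarrow> real) \<Rightarrow> nat \<Rightarrow> nat \<Rightarrow> ('x, 'y, 'p) icl_alg \<Rightarrow> (nat \<Rightarrow> nat \<Rightarrow> 'x \<times> 'y) \<Rightarrow> real" where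
  "icl_erm_obj l n T alg \<omega> = (1 / real T) * (\<Sum>t<T. emp_loss l n alg (\<omega> t))"

definition task_risk ::
  "('y \<Rightarrow> 'p \<Rightarrow> real) \<Rightarrow> nat \<Rightarrow> ('task \<Rightarrow> ('x \<times> 'y) measure) \<Rightarrow> ('x, 'y, 'p) icl_alg \<Rightarrow> 'task \<Rightarrow> real" where
  "task_risk l n D alg \<tau> = (\<integral>s. emp_loss l n alg s \<partial>task_seq_dist D n \<tau>)"

definition expected_task_risk ::
  "('y \<Rightarrow> 'p \<Rightarrow> real) \<Rightarrow> nat \<Rightarrow> 'task measure \<Rightarrow> ('task \<Rightarrow> ('x \<times> 'y) measure) \<Rightarrow> ('x, 'y, 'p) icl_alg \<Rightarrow> real" where
  "expected_task_risk l n DT D alg = (\<integral>\<tau>. task_risk l n D alg \<tau> \<partial>DT)"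

definition alg_dist ::
  "('x \<times> 'y) set \<Rightarrow> nat \<Rightarrow> ('x, 'y, 'p::real_normed_vector) icl_alg \<Rightarrow> ('x, 'y, 'p) icl_alg \<Rightarrow> ereal" where
  "alg_dist X n a a' =
     (SUP s \<in> {s. \<forall>i<n. s i \<in> X}.
        ereal ((1 / real n) * (\<Sum>i<n. norm (a (map s [0..<i]) (fst (s i)) - a' (map s [0..<i]) (fst (s i))))))"

definition covering_number :: "'a set \<Rightarrow> ('a \<Rightarrow> 'a \<Rightarrow> ereal) \<Rightarrow> real \<Rightarrow> enat" where
  "covering_number A d \<epsilon> =
     (if \<exists>C. finite C \<and> C \<subseteq> A \<and> (\<forall>a\<in>A. \<exists>c\<in>C. d a c \<le> ereal \<epsilon>)
      then enat (LEAST k. \<exists>C. finite C \<and> C \<subseteq> A \<and> card C = k \<and> (\<forall>a\<in>A. \<exists>c\<in>C. d a c \<le> ereal \<epsilon>))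
      else \<infinity>)"

end

theory Submission
  imports Defs "HOL-Probability.Probability"
begin

lemma kernel_meas:
  assumes DK: "D \<in> measurable DT (prob_algebra Z)"
  shows "task_seq_dist D n \<in> DT \<rightarrow>\<^sub>M prob_algebra (PiM {..<n} (\<lambda>_. Z))"
proof (rule measurable_prob_algebra_generated[OF sets_PiM Int_stable_prod_algebra prod_algebra_sets_into_space])
  fix \<tau> assume t: "\<tau> \<in> space DT"
  have Dt: "D \<tau> \<in> space (prob_algebra Z)" using measurable_space[OF DK t] .
  then have p: "prob_space (D \<tau>)" and s: "sets (D \<tau>) = sets Z" by (auto simp: space_prob_algebra)
  show "prob_space (task_seq_dist D n \<tau>)" unfolding task_seq_dist_def
    by (rule prob_space_PiM) (use p in auto)
  show "sets (task_seq_dist D n \<tau>) = sets (PiM {..<n} (\<lambda>_. Z))" unfolding task_seq_dist_def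
    by (rule sets_PiM_cong) (use s in auto)
next
  fix X assume "X \<in> prod_algebra {..<n} (\<lambda>_. Z)"
  then obtain J F where J: "finite J" "J \<subseteq> {..<n}" and F: "\<And>j. j \<in> J \<Longrightarrow> F j \<in> sets Z"
    and X: "X = prod_emb {..<n} (\<lambda>_. Z) J (Pi\<^sub>E J F)"
    by (auto simp: prod_algebra_def Pi_iff)
  have "(\<lambda>\<tau>. \<Prod>j\<in>J. emeasure (D \<tau>) (F j)) \<in> borel_measurable DT"
    using F measurable_emeasure_kernel[OF measurable_prob_algebraD[OF DK]] by (intro borel_measurable_prod_ennreal) auto
  moreover have "emeasure (task_seq_dist D n \<tau>) X = (\<Prod>j\<in>J. emeasure (D \<tau>) (F j))" if t: "\<tau> \<in> space DT" for \<tau>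
  proof -
    have Dt: "D \<tau> \<in> space (prob_algebra Z)" using measurable_space[OF DK t] .
    then have p: "prob_space (D \<tau>)" and s: "sets (D \<tau>) = sets Z" by (auto simp: space_prob_algebra)
    have sp: "space (D \<tau>) = space Z" using s by (rule sets_eq_imp_space_eq)
    have "X = prod_emb {..<n} (\<lambda>_. D \<tau>) J (Pi\<^sub>E J F)" unfolding X prod_emb_def by (simp add: sp)
    then show ?thesis unfolding task_seq_dist_def
      using emeasure_PiM_emb[of "{..<n}" "\<lambda>_. D \<tau>" J F] p J F s by auto
  qed
  ultimately show "(\<lambda>\<tau>. emeasure (task_seq_dist D n \<tau>) X) \<in> borel_measurable DT"
    using measurable_cong by (smt (verit))
qed


lemma src_facts:
  assumes DT: "prob_space DT" and DK: "D \<in> measurable DT (prob_algebra Z)"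
  shows "prob_space (source_seq_dist DT D n)"
    and "sets (source_seq_dist DT D n) = sets (PiM {..<n} (\<lambda>_. Z))"
    and "space (source_seq_dist DT D n) = PiE {..<n} (\<lambda>_. space Z)"
proof -
  have DTs: "DT \<in> space (prob_algebra DT)" using DT by (simp add: space_prob_algebra)
  note K = kernel_meas[OF DK, of n]
  show "prob_space (source_seq_dist DT D n)" unfolding source_seq_dist_def
    by (rule prob_space_bind'[OF DTs K])
  show s: "sets (source_seq_dist DT D n) = sets (PiM {..<n} (\<lambda>_. Z))" unfolding source_seq_dist_def
    by (rule sets_bind'[OF DTs K])
  show "space (source_seq_dist DT D n) = PiE {..<n} (\<lambda>_. space Z)"
    using sets_eq_imp_space_eq[OF s] by (simp add: space_PiM)
qed

lemma src_integral:
  fixes f :: "_ \<Rightarrow> real"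
  assumes DT: "prob_space DT" and DK: "D \<in> measurable DT (prob_algebra Z)"
    and f: "f \<in> borel_measurable (PiM {..<n} (\<lambda>_. Z))"
    and fb: "\<And>x. x \<in> space (PiM {..<n} (\<lambda>_. Z)) \<Longrightarrow> \<bar>f x\<bar> \<le> B"
  shows "integral\<^sup>L (source_seq_dist DT D n) f = (\<integral>\<tau>. integral\<^sup>L (task_seq_dist D n \<tau>) f \<partial>DT)"
proof -
  note K = measurable_prob_algebraD[OF kernel_meas[OF DK, of n]]
  interpret prob_space DT by (rule DT)
  show ?thesis unfolding source_seq_dist_def
  proof (rule integral_bind[OF f fb K])
    show "finite_measure DT" by unfold_locales
    show "AE x in DT. emeasure (task_seq_dist D n x) (space (task_seq_dist D n x)) \<le> ennreal 1"
      using measurable_space[OF K] by (auto intro!: AE_I2 subprob_space.subprob_emeasure_le_1 simp: space_subprob_algebra)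
  qed
qed

lemma sample_indep:
  assumes S: "prob_space S" and T: "T > 0"
    and g: "g \<in> borel_measurable S"
  shows "prob_space.indep_vars (PiM {..<T} (\<lambda>_. S)) (\<lambda>_. borel) (\<lambda>t \<omega>. g (\<omega> t)) {..<T}"
proof -
  interpret P: prob_space "PiM {..<T} (\<lambda>_. S)" by (rule prob_space_PiM) (use S in auto)
  have "P.indep_vars (\<lambda>_. S) (\<lambda>t \<omega>. \<omega> t) {..<T}"
  proof (subst P.indep_vars_iff_distr_eq_PiM')
    show "{..<T} \<noteq> {}" using T by auto
    show "(\<lambda>\<omega>. \<omega> i) \<in> measurable (PiM {..<T} (\<lambda>_. S)) S" if "i \<in> {..<T}" for i
      using that by (rule measurable_component_singleton)
    show "distr (PiM {..<T} (\<lambda>_. S)) (PiM {..<T} (\<lambda>_. S)) (\<lambda>x. \<lambda>i\<in>{..<T}. x i) =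
      PiM {..<T} (\<lambda>i. distr (PiM {..<T} (\<lambda>_. S)) S (\<lambda>\<omega>. \<omega> i))"
    proof -
      have "distr (PiM {..<T} (\<lambda>_. S)) (PiM {..<T} (\<lambda>_. S)) (\<lambda>x. \<lambda>i\<in>{..<T}. x i) = 
            distr (PiM {..<T} (\<lambda>_. S)) (PiM {..<T} (\<lambda>_. S)) (\<lambda>x. x)"
        by (rule distr_cong) (auto simp: space_PiM PiE_def extensional_restrict)
      also have "\<dots> = PiM {..<T} (\<lambda>_. S)" by (rule distr_id)
      also have "\<dots> = PiM {..<T} (\<lambda>i. distr (PiM {..<T} (\<lambda>_. S)) S (\<lambda>\<omega>. \<omega> i))"
        by (rule PiM_cong) (use distr_PiM_component[of "{..<T}" "\<lambda>_. S"] S in auto)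
      finally show ?thesis .
    qed
  qed
  then show ?thesis by (rule P.indep_vars_compose2) (use g in auto)
qed


lemma comp_integral:
  fixes g :: "_ \<Rightarrow> real"
  assumes S: "prob_space S" and t: "t < T" and g: "g \<in> borel_measurable S"
  shows "(\<integral>\<omega>. g (\<omega> t) \<partial>PiM {..<T} (\<lambda>_. S)) = integral\<^sup>L S g"
proof -
  have "integral\<^sup>L S g = integral\<^sup>L (distr (PiM {..<T} (\<lambda>_. S)) S (\<lambda>\<omega>. \<omega> t)) g"
    using distr_PiM_component[of "{..<T}" "\<lambda>_. S" t] S t by simp
  also have "\<dots> = (\<integral>\<omega>. g (\<omega> t) \<partial>PiM {..<T} (\<lambda>_. S))"
    by (rule integral_distr) (use t g in auto)
  finally show ?thesis by simp
qed

lemma hoeff_one: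
  fixes g :: "_ \<Rightarrow> real"
  assumes S: "prob_space S" and T: "T > 0" and g: "g \<in> borel_measurable S"
    and gb: "\<And>x. x \<in> space S \<Longrightarrow> 0 \<le> g x \<and> g x \<le> B" and B: "B > 0" and r: "r \<ge> 0"
  shows "measure (PiM {..<T} (\<lambda>_. S)) {\<omega>\<in>space (PiM {..<T} (\<lambda>_. S)).
           \<bar>(\<Sum>t<T. g (\<omega> t)) - real T * integral\<^sup>L S g\<bar> \<ge> real T * r} \<le> 2 * exp (-2 * real T * r\<^sup>2 / B\<^sup>2)"
proof -
  let ?M = "PiM {..<T} (\<lambda>_. S)"
  interpret P: prob_space ?M by (rule prob_space_PiM) (use S in auto)
  interpret H: Hoeffding_ineq ?M "{..<T}" "\<lambda>t \<omega>. g (\<omega> t)" "\<lambda>_. 0" "\<lambda>_. B" "\<Sum>t<T. P.expectation (\<lambda>\<omega>. g (\<omega> t))"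
  proof unfold_locales
    show "finite {..<T}" by simp
    show "P.indep_vars (\<lambda>_. borel) (\<lambda>t \<omega>. g (\<omega> t)) {..<T}" by (rule sample_indep[OF S T g])
    fix i assume i: "i \<in> {..<T}"
    show "AE x in ?M. g (x i) \<in> {0..B}"
      using i gb by (intro AE_I2) (auto simp: space_PiM PiE_iff)
  qed simp
  have mu: "(\<Sum>t<T. P.expectation (\<lambda>\<omega>. g (\<omega> t))) = real T * integral\<^sup>L S g"
    using comp_integral[OF S _ g, of _ T] by simp
  have sumB: "(\<Sum>i<T. (B - 0)\<^sup>2) = real T * B\<^sup>2" by simp
  have "P.prob {\<omega>\<in>space ?M. \<bar>(\<Sum>t<T. g (\<omega> t)) - real T * integral\<^sup>L S g\<bar> \<ge> real T * r}
      \<le> 2 * exp (-2 * (real T * r)\<^sup>2 / (\<Sum>i<T. (B - 0)\<^sup>2))"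
    using H.Hoeffding_ineq_abs_ge[of "real T * r"] r T B unfolding mu by (simp add: sumB)
  also have "-2 * (real T * r)\<^sup>2 / (\<Sum>i<T. (B - 0)\<^sup>2) = -2 * real T * r\<^sup>2 / B\<^sup>2"
    unfolding sumB using T by (simp add: power2_eq_square field_simps)
  finally show ?thesis .
qed

lemma lip_emp:
  fixes l :: "'y \<Rightarrow> 'p::real_normed_vector \<Rightarrow> real"
  assumes lip: "\<forall>y p q. \<bar>l y p - l y q\<bar> \<le> L * norm (p - q)" and L: "L \<ge> 0"
    and d: "alg_dist X n a c \<le> ereal \<epsilon>" and s: "\<forall>i<n. s i \<in> X"
  shows "\<bar>emp_loss l n a s - emp_loss l n c s\<bar> \<le> L * \<epsilon>"
proof -
  let ?N = "(1 / real n) * (\<Sum>i<n. norm (a (map s [0..<i]) (fst (s i)) - c (map s [0..<i]) (fst (s i))))"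
  have "ereal ?N \<le> alg_dist X n a c" unfolding alg_dist_def
    by (rule SUP_upper2[of s]) (use s in auto)
  then have "ereal ?N \<le> ereal \<epsilon>" using d by (rule order.trans)
  then have N: "?N \<le> \<epsilon>" by (simp only: ereal_less_eq)
  have "\<bar>emp_loss l n a s - emp_loss l n c s\<bar> =
     (1 / real n) * \<bar>\<Sum>i<n. l (snd (s i)) (a (map s [0..<i]) (fst (s i))) - l (snd (s i)) (c (map s [0..<i]) (fst (s i)))\<bar>"
    unfolding emp_loss_def sum_subtractf right_diff_distrib[symmetric] abs_mult by simp
  also have "\<dots> \<le> (1 / real n) * (\<Sum>i<n. \<bar>l (snd (s i)) (a (map s [0..<i]) (fst (s i))) - l (snd (s i)) (c (map s [0..<i]) (fst (s i)))\<bar>)"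
    by (intro mult_left_mono sum_abs) auto
  also have "\<dots> \<le> (1 / real n) * (\<Sum>i<n. L * norm (a (map s [0..<i]) (fst (s i)) - c (map s [0..<i]) (fst (s i))))"
    by (intro mult_left_mono sum_mono) (use lip in auto)
  also have "\<dots> = L * ?N" by (simp add: sum_distrib_left)
  also have "\<dots> \<le> L * \<epsilon>" by (rule mult_left_mono[OF N L])
  finally show ?thesis .
qed


lemma emp_bounds:
  assumes "\<forall>y p. 0 \<le> l y p \<and> l y p \<le> B"
  shows "0 \<le> emp_loss l n a s \<and> emp_loss l n a s \<le> B"
proof -
  have B: "0 \<le> B" using assms by (meson order.trans)
  have s0: "0 \<le> (\<Sum>i<n. l (snd (s i)) (a (map s [0..<i]) (fst (s i))))"
    using assms by (intro sum_nonneg) auto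
  have s1: "(\<Sum>i<n. l (snd (s i)) (a (map s [0..<i]) (fst (s i)))) \<le> real n * B"
    using sum_mono[of "{..<n}" "\<lambda>i. l (snd (s i)) (a (map s [0..<i]) (fst (s i)))" "\<lambda>_. B"] assms by auto
  show ?thesis
  proof (cases "n = 0")
    case True then show ?thesis using B by (simp add: emp_loss_def)
  next
    case False
    then have "(\<Sum>i<n. l (snd (s i)) (a (map s [0..<i]) (fst (s i)))) / real n \<le> B"
      using s1 by (simp add: divide_le_eq mult.commute)
    then show ?thesis using s0 by (simp add: emp_loss_def)
  qed
qed


theorem theorem6:
  fixes l :: "'y \<Rightarrow> 'p::euclidean_space \<Rightarrow> real"
    and A :: "('x, 'y, 'p) icl_alg set"
    and Z :: "('x \<times> 'y) measure"
    and DT :: "'task measure"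
    and D :: "'task \<Rightarrow> ('x \<times> 'y) measure"
    and n T :: nat and L B \<delta> :: real
    and erm :: "(nat \<Rightarrow> nat \<Rightarrow> 'x \<times> 'y) \<Rightarrow> ('x, 'y, 'p) icl_alg"
  assumes task_dist: "prob_space DT"
    and task_kernel: "D \<in> measurable DT (prob_algebra Z)"
    and lipschitz: "\<forall>y p q. \<bar>l y p - l y q\<bar> \<le> L * norm (p - q)"
    and bounded: "\<forall>y p. 0 \<le> l y p \<and> l y p \<le> B"
    and alg_meas: "\<forall>a\<in>A. (\<lambda>s. emp_loss l n a s) \<in> borel_measurable (PiM {..<n} (\<lambda>_. Z))"
    and T_pos: "T > 0"
    and delta: "0 < \<delta>" "\<delta> < 1"
    and erm: "\<forall>\<omega>\<in>space (source_sample_dist DT D n T).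
               erm \<omega> \<in> A \<and> (\<forall>a\<in>A. icl_erm_obj l n T (erm \<omega>) \<omega> \<le> icl_erm_obj l n T a \<omega>)"
  shows "\<exists>E\<in>sets (source_sample_dist DT D n T).
           measure (source_sample_dist DT D n T) E \<ge> 1 - 2 * \<delta> \<and>
           (\<forall>\<omega>\<in>E.
              ereal (expected_task_risk l n DT D (erm \<omega>) - (INF a\<in>A. expected_task_risk l n DT D a))
              \<le> (INF \<epsilon>\<in>{\<epsilon>. \<epsilon> \<ge> 0 \<and> covering_number A (alg_dist (space Z) n) \<epsilon> \<noteq> \<infinity>}.
                   ereal (4 * L * \<epsilon> + B * sqrt (2 * ln (real (the_enat (covering_number A (alg_dist (space Z) n) \<epsilon>)) / \<delta>) / real T))))"
proof -
  define S where "S = source_seq_dist DT D n"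
  define M where "M = source_sample_dist DT D n T"
  have M_eq: "M = PiM {..<T} (\<lambda>_. S)" by (simp add: M_def S_def source_sample_dist_def)
  have Sp: "prob_space S" and Ss: "sets S = sets (PiM {..<n} (\<lambda>_. Z))"
    and Ssp: "space S = PiE {..<n} (\<lambda>_. space Z)"
    using src_facts[OF task_dist task_kernel, of n] by (simp_all add: S_def)
  interpret Mp: prob_space M unfolding M_eq by (rule prob_space_PiM) (use Sp in auto)
  have spM: "\<omega> t i \<in> space Z" if "\<omega> \<in> space M" "t < T" "i < n" for \<omega> t i
    using that by (auto simp: M_eq space_PiM PiE_iff Ssp)
  have L0: "L \<ge> 0"
  proof -
    obtain b :: 'p where b: "b \<in> Basis" using nonempty_Basis by blast
    obtain y :: 'y where True by blast
    have "\<bar>l y b - l y 0\<bar> \<le> L * norm (b - 0)" using lipschitz by blast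
    moreover have "norm (b - 0) = 1" using b by simp
    ultimately have "\<bar>l y b - l y 0\<bar> \<le> L * 1" by simp
    then have "0 \<le> L * 1" by (rule order.trans[OF abs_ge_zero])
    then show ?thesis by simp
  qed
  have B0: "B \<ge> 0" using bounded by (meson order.trans)
  obtain \<omega>0 where \<omega>0: "\<omega>0 \<in> space M" using Mp.not_empty by blast
  have Ane: "A \<noteq> {}" using erm \<omega>0 unfolding M_def by blast
  have ermM: "erm \<omega> \<in> A" "\<And>a. a \<in> A \<Longrightarrow> icl_erm_obj l n T (erm \<omega>) \<omega> \<le> icl_erm_obj l n T a \<omega>"
    if "\<omega> \<in> space M" for \<omega> using erm that unfolding M_def by auto
  have gmeas: "emp_loss l n a \<in> borel_measurable S" if "a \<in> A" for a
    using alg_meas that measurable_cong_sets[OF Ss refl] by auto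
  have gb: "0 \<le> emp_loss l n a s" "emp_loss l n a s \<le> B" for a s
    using emp_bounds[OF bounded] by auto
  have gabs: "\<bar>emp_loss l n a s\<bar> \<le> B" for a s
    using gb[of a s] by (simp add: abs_le_iff)
  define \<mu> where "\<mu> a = expected_task_risk l n DT D a" for a
  have \<mu>S: "\<mu> a = integral\<^sup>L S (emp_loss l n a)" if "a \<in> A" for a
  proof -
    have "integral\<^sup>L S (emp_loss l n a) = (\<integral>\<tau>. integral\<^sup>L (task_seq_dist D n \<tau>) (emp_loss l n a) \<partial>DT)"
      unfolding S_def by (rule src_integral[OF task_dist task_kernel, where B=B])
        (use alg_meas that gabs in auto)
    then show ?thesis by (simp add: \<mu>_def expected_task_risk_def task_risk_def)
  qed
  have gint: "integrable S (emp_loss l n a)" if "a \<in> A" for a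
  proof -
    interpret Sp: prob_space S by (rule Sp)
    show ?thesis
      by (rule Sp.integrable_const_bound[where B=B]) (use gabs gmeas[OF that] in auto)
  qed
  have \<mu>lip: "\<bar>\<mu> a - \<mu> c\<bar> \<le> L * \<epsilon>"
    if a: "a \<in> A" and c: "c \<in> A" and d: "alg_dist (space Z) n a c \<le> ereal \<epsilon>" for a c \<epsilon>
  proof -
    interpret Sp: prob_space S by (rule Sp)
    have pt: "\<bar>emp_loss l n a s - emp_loss l n c s\<bar> \<le> L * \<epsilon>" if "s \<in> space S" for s
      by (rule lip_emp[OF lipschitz L0 d]) (use that in \<open>auto simp: Ssp\<close>)
    have "\<mu> a - \<mu> c = integral\<^sup>L S (\<lambda>s. emp_loss l n a s - emp_loss l n c s)"
      using \<mu>S[OF a] \<mu>S[OF c] gint[OF a] gint[OF c] by simp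
    also have "\<bar>\<dots>\<bar> \<le> integral\<^sup>L S (\<lambda>s. \<bar>emp_loss l n a s - emp_loss l n c s\<bar>)"
      by (rule integral_abs_bound)
    also have "\<dots> \<le> integral\<^sup>L S (\<lambda>_. L * \<epsilon>)"
      by (rule integral_mono) (use pt gint[OF a] gint[OF c] in auto)
    also have "\<dots> = L * \<epsilon>" by (simp add: Sp.prob_space)
    finally show ?thesis .
  qed
  have objsum: "icl_erm_obj l n T a \<omega> = (\<Sum>t<T. emp_loss l n a (\<omega> t)) / real T" for a \<omega>
    by (simp add: icl_erm_obj_def)
  have objlip: "\<bar>icl_erm_obj l n T a \<omega> - icl_erm_obj l n T c \<omega>\<bar> \<le> L * \<epsilon>"
    if \<omega>: "\<omega> \<in> space M" and d: "alg_dist (space Z) n a c \<le> ereal \<epsilon>" for a c \<epsilon> \<omega>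
  proof -
    have "\<bar>(\<Sum>t<T. emp_loss l n a (\<omega> t)) - (\<Sum>t<T. emp_loss l n c (\<omega> t))\<bar>
        \<le> (\<Sum>t<T. \<bar>emp_loss l n a (\<omega> t) - emp_loss l n c (\<omega> t)\<bar>)"
      unfolding sum_subtractf[symmetric] by (rule sum_abs)
    also have "\<dots> \<le> (\<Sum>t<T. L * \<epsilon>)"
      by (intro sum_mono lip_emp[OF lipschitz L0 d]) (use spM[OF \<omega>] in auto)
    finally have "\<bar>(\<Sum>t<T. emp_loss l n a (\<omega> t)) - (\<Sum>t<T. emp_loss l n c (\<omega> t))\<bar> \<le> real T * (L * \<epsilon>)"
      by simp
    then show ?thesis unfolding objsum using T_pos
      by (simp add: diff_divide_distrib[symmetric] abs_div divide_le_eq mult.commute)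
  qed
  define exc where "exc \<omega> = expected_task_risk l n DT D (erm \<omega>) - (INF a\<in>A. expected_task_risk l n DT D a)" for \<omega>
  define Idx where "Idx = {\<epsilon>. \<epsilon> \<ge> 0 \<and> covering_number A (alg_dist (space Z) n) \<epsilon> \<noteq> \<infinity>}"
  define f where "f \<epsilon> = 4 * L * \<epsilon> + B * sqrt (2 * ln (real (the_enat (covering_number A (alg_dist (space Z) n) \<epsilon>)) / \<delta>) / real T)" for \<epsilon>
  have det: "exc \<omega> \<le> 4 * L * \<epsilon> + 2 * r"
    if \<omega>: "\<omega> \<in> space M" and CA: "C \<subseteq> A"
      and cov: "\<forall>a\<in>A. \<exists>c\<in>C. alg_dist (space Z) n a c \<le> ereal \<epsilon>"
      and H: "\<forall>c\<in>C. \<bar>icl_erm_obj l n T c \<omega> - \<mu> c\<bar> \<le> r" for \<omega> C \<epsilon> r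
  proof -
    have dev: "\<bar>icl_erm_obj l n T a \<omega> - \<mu> a\<bar> \<le> 2 * L * \<epsilon> + r" if a: "a \<in> A" for a
    proof -
      obtain c where c: "c \<in> C" and d: "alg_dist (space Z) n a c \<le> ereal \<epsilon>" using cov a by blast
      have "\<bar>icl_erm_obj l n T a \<omega> - icl_erm_obj l n T c \<omega>\<bar> \<le> L * \<epsilon>" by (rule objlip[OF \<omega> d])
      moreover have "\<bar>\<mu> a - \<mu> c\<bar> \<le> L * \<epsilon>" using \<mu>lip[OF a _ d] c CA by blast
      moreover have "\<bar>icl_erm_obj l n T c \<omega> - \<mu> c\<bar> \<le> r" using H c by blast
      ultimately show ?thesis by linarith
    qed
    have "\<mu> (erm \<omega>) - (4 * L * \<epsilon> + 2 * r) \<le> \<mu> a" if a: "a \<in> A" for a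
      using dev[OF ermM(1)[OF \<omega>]] dev[OF a] ermM(2)[OF \<omega> a] by linarith
    then have "\<mu> (erm \<omega>) - (4 * L * \<epsilon> + 2 * r) \<le> (INF a\<in>A. \<mu> a)"
      using Ane by (intro cINF_greatest) auto
    then show ?thesis unfolding exc_def \<mu>_def by simp
  qed
  have per_eps: "0 \<le> f \<epsilon> \<and> (\<exists>G\<in>sets M. measure M G \<ge> 1 - 2 * \<delta> \<and> (\<forall>\<omega>\<in>G. exc \<omega> \<le> f \<epsilon>))"
    if \<epsilon>: "\<epsilon> \<in> Idx" for \<epsilon>
  proof -
    let ?P = "\<lambda>k. \<exists>C. finite C \<and> C \<subseteq> A \<and> card C = k \<and> (\<forall>a\<in>A. \<exists>c\<in>C. alg_dist (space Z) n a c \<le> ereal \<epsilon>)"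
    have ex: "\<exists>C. finite C \<and> C \<subseteq> A \<and> (\<forall>a\<in>A. \<exists>c\<in>C. alg_dist (space Z) n a c \<le> ereal \<epsilon>)"
      using \<epsilon> unfolding Idx_def covering_number_def by (auto split: if_splits)
    define k where "k = (LEAST k. ?P k)"
    have cn: "covering_number A (alg_dist (space Z) n) \<epsilon> = enat k"
      using ex unfolding covering_number_def k_def by simp
    have "?P k" unfolding k_def by (rule LeastI_ex) (use ex in blast)
    then obtain C where C: "finite C" "C \<subseteq> A" "card C = k"
      and cov: "\<forall>a\<in>A. \<exists>c\<in>C. alg_dist (space Z) n a c \<le> ereal \<epsilon>" by blast
    have "C \<noteq> {}" using cov Ane by blast
    then have k1: "k \<ge> 1" using C card_gt_0_iff[of C] by linarith
    have \<epsilon>0: "\<epsilon> \<ge> 0" using \<epsilon> by (simp add: Idx_def)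
    define x where "x = ln (real k / \<delta>)"
    have x0: "x \<ge> 0" unfolding x_def using k1 delta by (simp add: ln_ge_zero_iff divide_simps)
    define r where "r = B * sqrt (x / (2 * real T))"
    have r0: "r \<ge> 0" unfolding r_def using B0 x0 by simp
    have f_eq: "f \<epsilon> = 4 * L * \<epsilon> + 2 * r"
    proof -
      have e: "2 * x / real T = 2\<^sup>2 * (x / (2 * real T))" by (simp add: power2_eq_square)
      have "sqrt (2 * x / real T) = sqrt (2\<^sup>2 * (x / (2 * real T)))" by (simp only: e)
      also have "\<dots> = 2 * sqrt (x / (2 * real T))" by (simp only: real_sqrt_mult real_sqrt_abs)
      finally show ?thesis unfolding f_def cn r_def x_def by simp
    qed
    have "0 \<le> f \<epsilon>" unfolding f_eq using L0 \<epsilon>0 r0 by simp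
    moreover have "\<exists>G\<in>sets M. measure M G \<ge> 1 - 2 * \<delta> \<and> (\<forall>\<omega>\<in>G. exc \<omega> \<le> f \<epsilon>)"
    proof (cases "B = 0")
      case True
      have z: "emp_loss l n a s = 0" for a s using gb[of a s] True by simp
      have z': "emp_loss l n a = (\<lambda>_. 0)" for a by (rule ext) (rule z)
      have "\<mu> c = 0" if "c \<in> A" for c using \<mu>S[OF that] by (simp add: z')
      then have H: "\<forall>c\<in>C. \<bar>icl_erm_obj l n T c \<omega> - \<mu> c\<bar> \<le> r" for \<omega>
        using C r0 by (auto simp: icl_erm_obj_def z)
      show ?thesis
        by (rule bexI[of _ "space M"]) (use det[OF _ C(2) cov H] f_eq delta Mp.prob_space in auto)
    next
      case False
      with B0 have Bp: "B > 0" by simp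
      define bad where "bad c = {\<omega>\<in>space M. \<bar>(\<Sum>t<T. emp_loss l n c (\<omega> t)) - real T * integral\<^sup>L S (emp_loss l n c)\<bar> \<ge> real T * r}" for c
      have bad_sets: "bad c \<in> sets M" if "c \<in> A" for c
      proof -
        have "(\<lambda>\<omega>. emp_loss l n c (\<omega> t)) \<in> borel_measurable M" if "t < T" for t
          unfolding M_eq using gmeas[OF \<open>c \<in> A\<close>] that
          by (intro measurable_compose[OF measurable_component_singleton]) auto
        then show ?thesis unfolding bad_def by measurable
      qed
      have bad_prob: "measure M (bad c) \<le> 2 * (\<delta> / real k)" if "c \<in> A" for c
      proof -
        have "measure M (bad c) \<le> 2 * exp (-2 * real T * r\<^sup>2 / B\<^sup>2)"
          unfolding bad_def M_eq
          by (rule hoeff_one[OF Sp T_pos gmeas[OF that] _ Bp r0]) (use gb in auto)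
        also have "-2 * real T * r\<^sup>2 / B\<^sup>2 = - x"
          unfolding r_def using Bp T_pos x0 by (simp add: power_mult_distrib field_simps)
        also have "exp (- x) = \<delta> / real k"
          unfolding x_def using k1 delta by (simp add: exp_minus exp_ln divide_simps)
        finally show ?thesis .
      qed
      define G where "G = space M - (\<Union>c\<in>C. bad c)"
      have Gs: "G \<in> sets M" unfolding G_def using C bad_sets by auto
      have "measure M (\<Union>c\<in>C. bad c) \<le> (\<Sum>c\<in>C. measure M (bad c))"
        by (rule Mp.finite_measure_subadditive_finite) (use C bad_sets in auto)
      also have "\<dots> \<le> (\<Sum>c\<in>C. 2 * (\<delta> / real k))" by (rule sum_mono) (use C bad_prob in auto)
      also have "\<dots> = 2 * \<delta>" using C k1 by simp
      finally have ub: "measure M (\<Union>c\<in>C. bad c) \<le> 2 * \<delta>" .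
      have "measure M G = 1 - measure M (\<Union>c\<in>C. bad c)"
        unfolding G_def by (rule Mp.prob_compl) (use C bad_sets in auto)
      with ub have PG: "measure M G \<ge> 1 - 2 * \<delta>" by simp
      have "exc \<omega> \<le> f \<epsilon>" if \<omega>G: "\<omega> \<in> G" for \<omega>
      proof -
        have \<omega>: "\<omega> \<in> space M" using \<omega>G by (simp add: G_def)
        have "\<bar>icl_erm_obj l n T c \<omega> - \<mu> c\<bar> \<le> r" if c: "c \<in> C" for c
        proof -
          have cA: "c \<in> A" using c C by blast
          have "\<omega> \<notin> bad c" using \<omega>G c by (auto simp: G_def)
          then have "\<bar>(\<Sum>t<T. emp_loss l n c (\<omega> t)) - real T * \<mu> c\<bar> < real T * r"
            using \<omega> \<mu>S[OF cA] by (auto simp: bad_def)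
          then have "\<bar>((\<Sum>t<T. emp_loss l n c (\<omega> t)) - real T * \<mu> c) / real T\<bar> \<le> r"
            using T_pos by (simp add: abs_div divide_le_eq mult.commute)
          moreover have "((\<Sum>t<T. emp_loss l n c (\<omega> t)) - real T * \<mu> c) / real T = icl_erm_obj l n T c \<omega> - \<mu> c"
            using T_pos by (simp add: objsum diff_divide_distrib)
          ultimately show ?thesis by simp
        qed
        then show ?thesis using det[OF \<omega> C(2) cov] f_eq by auto
      qed
      then show ?thesis using Gs PG by blast
    qed
    ultimately show ?thesis by blast
  qed
  have main: "\<exists>E\<in>sets M. measure M E \<ge> 1 - 2 * \<delta> \<and> (\<forall>\<omega>\<in>E. \<forall>\<epsilon>\<in>Idx. exc \<omega> \<le> f \<epsilon>)"
  proof (cases "Idx = {}")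
    case True
    then show ?thesis using delta by (intro bexI[of _ "space M"]) (auto simp: Mp.prob_space)
  next
    case False
    have f0: "f \<epsilon> \<ge> 0" if "\<epsilon> \<in> Idx" for \<epsilon>
      using per_eps[OF that] by blast
    define I where "I = Inf (f ` Idx)"
    have bdd: "bdd_below (f ` Idx)" using f0 by (intro bdd_belowI2[of _ 0]) auto
    have I_le: "I \<le> f \<epsilon>" if "\<epsilon> \<in> Idx" for \<epsilon>
      unfolding I_def using that bdd by (intro cInf_lower) auto
    have "\<exists>\<epsilon>\<in>Idx. f \<epsilon> < I + 1 / (real j + 1)" for j
    proof -
      have "Inf (f ` Idx) < I + 1 / (real j + 1)" unfolding I_def by simp
      then obtain y where "y \<in> f ` Idx" "y < I + 1 / (real j + 1)"
        using cInf_lessD[of "f ` Idx"] False by blast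
      then show ?thesis by blast
    qed
    then obtain eps where eps: "\<And>j. eps j \<in> Idx" "\<And>j. f (eps j) < I + 1 / (real j + 1)"
      by metis
    have "\<exists>G. G \<in> sets M \<and> measure M G \<ge> 1 - 2 * \<delta> \<and> (\<forall>\<omega>\<in>G. exc \<omega> \<le> f (eps j))" for j
      using per_eps[OF eps(1)[of j]] by blast
    then obtain G where G: "\<And>j. G j \<in> sets M" "\<And>j. measure M (G j) \<ge> 1 - 2 * \<delta>"
      "\<And>j \<omega>. \<omega> \<in> G j \<Longrightarrow> exc \<omega> \<le> f (eps j)"
      by metis
    define U where "U m = (\<Union>j\<in>{m..}. G j)" for m
    have Us: "U m \<in> sets M" for m unfolding U_def using G(1) by auto
    have Udec: "decseq U" unfolding U_def decseq_def by (auto intro: order.trans)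
    have PU: "measure M (U m) \<ge> 1 - 2 * \<delta>" for m
    proof -
      have "measure M (G m) \<le> measure M (U m)"
        by (rule Mp.finite_measure_mono) (use Us in \<open>auto simp: U_def\<close>)
      then show ?thesis using G(2)[of m] by linarith
    qed
    define E where "E = (\<Inter>m. U m)"
    have Es: "E \<in> sets M" unfolding E_def using Us by auto
    have "(\<lambda>m. measure M (U m)) \<longlonglongrightarrow> measure M E"
      unfolding E_def by (rule Mp.finite_Lim_measure_decseq) (use Us Udec in auto)
    then have PE: "measure M E \<ge> 1 - 2 * \<delta>"
      by (rule LIMSEQ_le_const) (use PU in auto)
    have "exc \<omega> \<le> f \<epsilon>" if \<omega>: "\<omega> \<in> E" and \<epsilon>: "\<epsilon> \<in> Idx" for \<omega> \<epsilon>
    proof (rule ccontr)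
      assume "\<not> exc \<omega> \<le> f \<epsilon>"
      then have gap: "exc \<omega> - I > 0" using I_le[OF \<epsilon>] by linarith
      obtain m :: nat where m: "1 / (real m + 1) < exc \<omega> - I"
        using reals_Archimedean[OF gap] by (metis inverse_eq_divide of_nat_Suc add.commute)
      have "\<omega> \<in> U m" using \<omega> by (simp add: E_def)
      then obtain j where j: "j \<ge> m" "\<omega> \<in> G j" by (auto simp: U_def)
      have "1 / (real j + 1) \<le> 1 / (real m + 1)" using j(1) by (simp add: frac_le)
      then show False using G(3)[OF j(2)] eps(2)[of j] m by linarith
    qed
    then show ?thesis using Es PE by blast
  qed
  then obtain E where E: "E \<in> sets M" "measure M E \<ge> 1 - 2 * \<delta>" "\<And>\<omega> \<epsilon>. \<omega> \<in> E \<Longrightarrow> \<epsilon> \<in> Idx \<Longrightarrow> exc \<omega> \<le> f \<epsilon>"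
    by blast
  show ?thesis
  proof (rule bexI[of _ E])
    show "E \<in> sets (source_sample_dist DT D n T)" using E(1) by (simp add: M_def)
    have "ereal (exc \<omega>) \<le> (INF \<epsilon>\<in>Idx. ereal (f \<epsilon>))" if "\<omega> \<in> E" for \<omega>
      by (rule INF_greatest) (use E(3)[OF that] in simp)
    then show "1 - 2 * \<delta> \<le> measure (source_sample_dist DT D n T) E \<and>
      (\<forall>\<omega>\<in>E. ereal (expected_task_risk l n DT D (erm \<omega>) - (INF a\<in>A. expected_task_risk l n DT D a))
        \<le> (INF \<epsilon>\<in>{\<epsilon>. \<epsilon> \<ge> 0 \<and> covering_number A (alg_dist (space Z) n) \<epsilon> \<noteq> \<infinity>}.
             ereal (4 * L * \<epsilon> + B * sqrt (2 * ln (real (the_enat (covering_number A (alg_dist (space Z) n) \<epsilon>)) / \<delta>) / real T))))"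
      using E(2) unfolding M_def exc_def Idx_def f_def by simp
  qed
qed

end
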